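(* Let $\zeta=e^{-2\pi i/4}=-i$, and let $\Gamma$ be the group generated by the linear operators $L_1,L_{-1}$ on $\mathbb{C}^2$ (basis $(e_{-1},e_1)$) given by $L_1(e_{-1})=e_{-1}-\zeta e_1$, $L_1(e_1)=-\zeta e_1$, $L_{-1}(e_1)=e_1-e_{-1}$, $L_{-1}(e_{-1})=-\zeta e_{-1}$. Then the natural action of $\Gamma$ on $\mathbb{C}^2$, viewed as a real representation on $\mathbb{R}^4$, is irreducible over $\mathbb{R}$.
   Context: This is the case $d=2$, $\alpha=\frac14$ of the operators $L_p$ ($p\in\{-1,1\}$), which preserve the positive definite hermitian form $Q_{1/4}$. *)

theory Defs
  imports "HOL-Analysis.Analysis"
begin

text \<open>C^2 with basis (e_{-1}, e_1): coordinate 1 is e_{-1}, coordinate 2 is e_1.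
  Matrices act on column vectors; a matrix is given as the vector of its rows.\<close>

definition zeta :: complex where
  "zeta = exp (- (2 * of_real pi * \<i>) / 4)"

text \<open>L_1 e_{-1} = e_{-1} - zeta e_1,  L_1 e_1 = - zeta e_1.\<close>
definition L_plus :: "complex^2^2" where
  "L_plus = vector [vector [1, 0], vector [- zeta, - zeta]]"

text \<open>L_{-1} e_1 = e_1 - e_{-1},  L_{-1} e_{-1} = - zeta e_{-1}.\<close>
definition L_minus :: "complex^2^2" where
  "L_minus = vector [vector [- zeta, -1], vector [0, 1]]"

inductive_set Gamma :: "(complex^2^2) set" where
  one: "mat 1 \<in> Gamma"
| gen_plus: "L_plus \<in> Gamma"
| gen_minus: "L_minus \<in> Gamma"
| inv: "A \<in> Gamma \<Longrightarrow> matrix_inv A \<in> Gamma"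
| mult: "A \<in> Gamma \<Longrightarrow> B \<in> Gamma \<Longrightarrow> A ** B \<in> Gamma"

end

theory Submission
  imports Defs
begin

lemma zeta_eq: "zeta = - \<i>"
proof -
  have "- (2 * of_real pi * \<i>) / 4 = \<i> * complex_of_real (-(pi/2))" by (simp add: field_simps)
  then show ?thesis unfolding zeta_def by (simp only: exp_Euler) (simp add: cos_of_real sin_of_real flip: of_real_minus, simp)
qed

lemma Lp: "L_plus *v v = vector [v$1, \<i> * v$1 + \<i> * v$2]"
  by (simp add: L_plus_def zeta_eq vec_eq_iff forall_2 matrix_vector_mult_def sum_2 vector_2)

lemma Lm: "L_minus *v v = vector [\<i> * v$1 - v$2, v$2]"
  by (simp add: L_minus_def zeta_eq vec_eq_iff forall_2 matrix_vector_mult_def sum_2 vector_2)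

lemma span2:
  assumes "subspace V" "(vector [0, c] :: complex^2) \<in> V" "vector [0, \<i>*c] \<in> V" "c \<noteq> 0"
  shows "vector [0, z] \<in> V"
proof -
  have "vector [0, z] = Re (z/c) *\<^sub>R (vector [0, c] :: complex^2) + Im (z/c) *\<^sub>R vector [0, \<i>*c]"
  proof -
    have "z = (complex_of_real (Re (z/c)) + \<i> * complex_of_real (Im (z/c))) * c"
      using assms(4) complex_eq[of "z/c"] by (simp add: field_simps)
    then show ?thesis
      by (simp add: vec_eq_iff forall_2 vector_2) (simp add: scaleR_conv_of_real algebra_simps)
  qed
  then show ?thesis using assms by (simp add: subspace_add subspace_scale)
qed

lemma span1:
  assumes "subspace V" "(vector [c, 0] :: complex^2) \<in> V" "vector [\<i>*c, 0] \<in> V" "c \<noteq> 0"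
  shows "vector [z, 0] \<in> V"
proof -
  have "vector [z, 0] = Re (z/c) *\<^sub>R (vector [c, 0] :: complex^2) + Im (z/c) *\<^sub>R vector [\<i>*c, 0]"
  proof -
    have "z = (complex_of_real (Re (z/c)) + \<i> * complex_of_real (Im (z/c))) * c"
      using assms(4) complex_eq[of "z/c"] by (simp add: field_simps)
    then show ?thesis
      by (simp add: vec_eq_iff forall_2 vector_2) (simp add: scaleR_conv_of_real algebra_simps)
  qed
  then show ?thesis using assms by (simp add: subspace_add subspace_scale)
qed

theorem mainTheorem15:
  shows "\<forall>V :: (complex^2) set.
           subspace V \<and> (\<forall>g\<in>Gamma. \<forall>v\<in>V. g *v v \<in> V)
           \<longrightarrow> V = {0} \<or> V = UNIV"
proof (intro allI impI)
  fix V :: "(complex^2) set"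
  assume h: "subspace V \<and> (\<forall>g\<in>Gamma. \<forall>v\<in>V. g *v v \<in> V)"
  hence S: "subspace V" and I: "\<And>g v. g \<in> Gamma \<Longrightarrow> v \<in> V \<Longrightarrow> g *v v \<in> V" by auto
  have P: "vector [0, \<i> * v$1 + (\<i>-1) * v$2] \<in> V" if "v \<in> V" for v
  proof -
    have "L_plus *v v - v \<in> V" using I[OF Gamma.gen_plus that] that S by (simp add: subspace_diff)
    moreover have "L_plus *v v - v = vector [0, \<i> * v$1 + (\<i>-1) * v$2]"
      by (simp add: Lp vec_eq_iff forall_2 vector_2 algebra_simps)
    ultimately show ?thesis by simp
  qed
  have M: "vector [(\<i>-1) * v$1 - v$2, 0] \<in> V" if "v \<in> V" for v
  proof -
    have "L_minus *v v - v \<in> V" using I[OF Gamma.gen_minus that] that S by (simp add: subspace_diff)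
    moreover have "L_minus *v v - v = vector [(\<i>-1) * v$1 - v$2, 0]"
      by (simp add: Lm vec_eq_iff forall_2 vector_2 algebra_simps)
    ultimately show ?thesis by simp
  qed
  have col2: "vector [0, z] \<in> V" if c: "vector [0, c] \<in> V" "c \<noteq> 0" for c z
  proof -
    have "vector [- c, 0] \<in> V" using M[OF c(1)] by (simp add: vector_2)
    from P[OF this] have "vector [0, \<i> * (- c)] \<in> V" by (simp add: vector_2)
    hence "- 1 *\<^sub>R (vector [0, \<i> * (- c)] :: complex^2) \<in> V" using S by (simp only: subspace_scale)
    moreover have "- 1 *\<^sub>R (vector [0, \<i> * (- c)] :: complex^2) = vector [0, \<i> * c]"
      by (simp add: vec_eq_iff forall_2 vector_2)
    ultimately have "vector [0, \<i> * c] \<in> V" by simp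
    then show ?thesis using span2[OF S c(1)] c(2) by blast
  qed
  show "V = {0} \<or> V = UNIV"
  proof (cases "V = {0}")
    case False
    then obtain v where v: "v \<in> V" "v \<noteq> 0" using S subspace_0 by blast
    have ex: "\<exists>c. vector [0, c] \<in> V \<and> c \<noteq> 0"
    proof (cases "\<i> * v$1 + (\<i>-1) * v$2 = 0")
      case False then show ?thesis using P[OF v(1)] by blast
    next
      case True
      hence a: "v$1 = (-1 - \<i>) * v$2"
        by (simp add: field_simps) (metis (no_types, lifting) True add.commute add_diff_cancel_right' complex_i_mult_minus diff_minus_eq_add mult.assoc mult_minus_left right_diff_distrib' mult_1)
      have b: "v$2 \<noteq> 0" using v(2) a by (auto simp: vec_eq_iff forall_2)
      have "(\<i>-1) * ((-1 - \<i>) * x) - x = x" for x :: complex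
        by (simp add: algebra_simps)
      hence "(\<i>-1) * v$1 - v$2 = v$2" by (simp only: a)
      hence "vector [v$2, 0] \<in> V" using M[OF v(1)] by simp
      from P[OF this] have "vector [0, \<i> * v$2] \<in> V" by (simp add: vector_2)
      then show ?thesis using b by force
    qed
    then obtain c where c: "vector [0, c] \<in> V" "c \<noteq> 0" by blast
    have c1: "vector [z, 0] \<in> V" for z
    proof -
      have "vector [0, - z] \<in> V" using col2[OF c] by blast
      from M[OF this] show ?thesis by (simp add: vector_2)
    qed
    have "x \<in> V" for x :: "complex^2"
    proof -
      have "x = vector [x$1, 0] + vector [0, x$2]" by (simp add: vec_eq_iff forall_2 vector_2)
      then show ?thesis using c1 col2[OF c] S by (metis subspace_add)
    qed
    then show ?thesis by blast
  qed simp
qed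

end
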